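(* Let $C\subset\mathbb{R}^l$ be closed and let $g:\mathbb{R}^n\to\mathbb{R}^l$ be continuously differentiable near $\bar x\in g^{-1}(C)$ and twice differentiable at $\bar x$. Assume that every pair $(u,\lambda)\in\mathbb{R}^n\times\mathbb{R}^l$ satisfying $u\ne0$, $\nabla g(\bar x)u\in T_C(g(\bar x))$, $\lambda\in N_C(g(\bar x);\nabla g(\bar x)u)$, $\nabla g(\bar x)^T\lambda=0$, and $\tfrac12\langle\nabla^2\langle\lambda,g\rangle(\bar x)u,u\rangle\ge\underline\chi_C(\lambda,g(\bar x);\nabla g(\bar x)u)$ has $\lambda=0$. Then the mapping $x\mapsto g(x)-C$ is metrically subregular at $(\bar x,0)$.
   Context: Metric subregularity of $x\mapsto g(x)-C$ at $(\bar x,0)$: there are $\kappa\ge0$ and a neighborhood $U$ of $\bar x$ with $\operatorname{dist}(x;g^{-1}(C))\le\kappa\operatorname{dist}(g(x);C)$ for $x\in U$. $\langle\lambda,g\rangle(x)=\langle\lambda,g(x)\rangle$. Lower curvature: $\underline\chi_\Omega(\lambda,\bar z;v):=\lim_{\epsilon\downarrow0}\inf\{\langle\lambda,v'-v\rangle/\tau: 0<\tau<\epsilon,\|v'-v\|<\epsilon,\operatorname{dist}(\lambda;N_\Omega(\bar z+\tau v'))<\epsilon\}$ ($\inf\emptyset=+\infty$, $N_\Omega(z)=\emptyset$ off $\Omega$). $T_C$ contingent cone; $N$ limiting normal cone; $N_C(\bar z;w)=\{v:\exists t_k\downarrow0,w_k\to w,v_k\to v,\ \bar z+t_kw_k\in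 C,\ v_k\in\widehat N_C(\bar z+t_kw_k)\}$ the directional limiting normal cone, $\widehat N$ the regular normal cone. *)

theory Defs
  imports "HOL-Analysis.Analysis" "HOL-Library.Extended_Real"
begin

definition tangent_cone :: "'a::real_normed_vector set \<Rightarrow> 'a \<Rightarrow> 'a set" where
  "tangent_cone C z = {w. \<exists>t wk. (\<forall>k. t k > 0) \<and> (t \<longlonglongrightarrow> 0) \<and> (wk \<longlonglongrightarrow> w)
       \<and> (\<forall>k. z + t k *\<^sub>R wk k \<in> C)}"

definition regular_normal_cone :: "'a::real_inner set \<Rightarrow> 'a \<Rightarrow> 'a set" where
  "regular_normal_cone C z = {v. z \<in> C \<and>
       (\<forall>e>0. \<exists>d>0. \<forall>z'\<in>C. norm (z' - z) < d \<longrightarrow> inner v (z' - z) \<le> e * norm (z' - z))}"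

definition limiting_normal_cone :: "'a::real_inner set \<Rightarrow> 'a \<Rightarrow> 'a set" where
  "limiting_normal_cone C z = {v. z \<in> C \<and> (\<exists>zk vk. (\<forall>k. zk k \<in> C) \<and> (zk \<longlonglongrightarrow> z)
       \<and> (vk \<longlonglongrightarrow> v) \<and> (\<forall>k. vk k \<in> regular_normal_cone C (zk k)))}"

definition dir_normal_cone :: "'a::real_inner set \<Rightarrow> 'a \<Rightarrow> 'a \<Rightarrow> 'a set" where
  "dir_normal_cone C z w = {v. \<exists>t wk vk. (\<forall>k. t k > 0) \<and> (t \<longlonglongrightarrow> 0) \<and> (wk \<longlonglongrightarrow> w)
       \<and> (vk \<longlonglongrightarrow> v) \<and> (\<forall>k. z + t k *\<^sub>R wk k \<in> C)
       \<and> (\<forall>k. vk k \<in> regular_normal_cone C (z + t k *\<^sub>R wk k))}"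

text \<open>Lower curvature; the infimum of the empty set is +infinity (Inf {} = top in ereal).
  The condition dist(lam; N(z + tau v')) < eps is written as the existence of a normal
  within distance eps (so that it is false for an empty normal cone).\<close>
definition lower_curvature :: "'a::real_inner set \<Rightarrow> 'a \<Rightarrow> 'a \<Rightarrow> 'a \<Rightarrow> ereal" where
  "lower_curvature \<Omega> lam z v = Lim (at_right (0::real)) (\<lambda>e.
      Inf {ereal (inner lam (v' - v) / \<tau>) | \<tau> v'. 0 < \<tau> \<and> \<tau> < e \<and> norm (v' - v) < e \<and>
           (\<exists>\<mu>\<in>limiting_normal_cone \<Omega> (z + \<tau> *\<^sub>R v'). dist lam \<mu> < e)})"

definition metrically_subregular :: "('a::metric_space \<Rightarrow> 'b::metric_space set) \<Rightarrow> 'a \<Rightarrow> 'b \<Rightarrow> bool" where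
  "metrically_subregular F xbar ybar \<longleftrightarrow> ybar \<in> F xbar \<and>
     (\<exists>\<kappa>\<ge>0. \<exists>U. open U \<and> xbar \<in> U \<and>
        (\<forall>x\<in>U. infdist x {x'. ybar \<in> F x'} \<le> \<kappa> * infdist ybar (F x)))"

end

theory Submission
  imports Defs
begin


lemma taylor2:
  fixes g :: "'a::euclidean_space \<Rightarrow> 'b::euclidean_space" and l :: 'b
    and g' :: "'a \<Rightarrow> ('a \<Rightarrow>\<^sub>L 'b)" and g'' :: "'a \<Rightarrow> ('a \<Rightarrow>\<^sub>L 'b)"
  assumes U0: "open U0" "xbar \<in> U0" and gd: "\<forall>x\<in>U0. (g has_derivative blinfun_apply (g' x)) (at x)"
    and twice: "(g' has_derivative g'') (at xbar)"
  shows "((\<lambda>y. (inner l (g y - g xbar - blinfun_apply (g' xbar) (y - xbar))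
     - 1/2 * inner l (blinfun_apply (g'' (y - xbar)) (y - xbar))) / (norm (y - xbar))^2) \<longlongrightarrow> 0) (at xbar)"
proof (rule LIM_I)
  fix e :: real assume e: "e > 0"
  define N where "N = norm l + 1"
  have N: "N > 0" unfolding N_def using norm_ge_zero[of l] by linarith
  define \<epsilon> where "\<epsilon> = e / (2 * N)"
  have \<epsilon>: "\<epsilon> > 0" using e N unfolding \<epsilon>_def by simp
  have lin: "bounded_linear g''" using twice by (simp add: has_derivative_def)
  from twice[unfolded has_derivative_at_alt] \<epsilon> obtain d1 where d1: "d1 > 0"
    "\<forall>y. norm (y - xbar) < d1 \<longrightarrow> norm (g' y - g' xbar - g'' (y - xbar)) \<le> \<epsilon> * norm (y - xbar)"
    by blast
  from U0 obtain d2 where d2: "d2 > 0" "ball xbar d2 \<subseteq> U0" by (meson openE)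
  show "\<exists>s>0. \<forall>y. y \<noteq> xbar \<and> norm (y - xbar) < s \<longrightarrow>
     norm ((inner l (g y - g xbar - blinfun_apply (g' xbar) (y - xbar))
     - 1/2 * inner l (blinfun_apply (g'' (y - xbar)) (y - xbar))) / (norm (y - xbar))^2 - 0) < e"
  proof (intro exI[of _ "min d1 d2"] conjI allI impI)
    show "min d1 d2 > 0" using d1 d2 by simp
    fix y assume y: "y \<noteq> xbar \<and> norm (y - xbar) < min d1 d2"
    define D where "D = y - xbar"
    have Dpos: "norm D > 0" using y by (simp add: D_def)
    define \<phi> where "\<phi> s = inner l (g (xbar + s *\<^sub>R D)) - s * inner l (g' xbar D)
        - s^2/2 * inner l (g'' D D)" for s
    define \<phi>' where "\<phi>' s = inner l (g' (xbar + s *\<^sub>R D) D) - inner l (g' xbar D)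
        - s * inner l (g'' D D)" for s
    have der: "(\<phi> has_real_derivative \<phi>' s) (at s)" if s: "0 \<le> s" "s \<le> 1" for s
    proof -
      have "norm (s *\<^sub>R D) \<le> norm D" using s by (simp add: mult_left_le_one_le)
      then have "xbar + s *\<^sub>R D \<in> ball xbar d2" using y by (simp add: D_def dist_norm) (smt (verit) mult_left_le_one_le norm_ge_zero)
      then have "xbar + s *\<^sub>R D \<in> U0" using d2 by blast
      then have gx: "(g has_derivative blinfun_apply (g' (xbar + s *\<^sub>R D))) (at (xbar + s *\<^sub>R D))"
        using gd by blast
      have a: "((\<lambda>s. xbar + s *\<^sub>R D) has_derivative (\<lambda>h. h *\<^sub>R D)) (at s)"
        by (auto intro!: derivative_eq_intros)
      have b: "((\<lambda>s. g (xbar + s *\<^sub>R D)) has_derivative (\<lambda>h. g' (xbar + s *\<^sub>R D) (h *\<^sub>R D))) (at s)"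
        using has_derivative_compose[OF a gx] by simp
      have c: "((\<lambda>s. inner l (g (xbar + s *\<^sub>R D))) has_derivative (\<lambda>h. inner l (g' (xbar + s *\<^sub>R D) (h *\<^sub>R D)))) (at s)"
        using bounded_linear.has_derivative[OF bounded_linear_inner_right b] by simp
      have c': "((\<lambda>s. inner l (g (xbar + s *\<^sub>R D))) has_real_derivative inner l (g' (xbar + s *\<^sub>R D) D)) (at s)"
        unfolding has_field_derivative_def using c
        by (simp add: blinfun.scaleR_right mult.commute[of _ "inner l _"] mult_commute_abs)
      have p: "((\<lambda>s. s * inner l (g' xbar D) + s^2/2 * inner l (g'' D D)) has_real_derivative
          (inner l (g' xbar D) + s * inner l (g'' D D))) (at s)"
        by (auto intro!: derivative_eq_intros)
      have "((\<lambda>s. inner l (g (xbar + s *\<^sub>R D)) - (s * inner l (g' xbar D) + s^2/2 * inner l (g'' D D)))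
         has_real_derivative (inner l (g' (xbar + s *\<^sub>R D) D) - (inner l (g' xbar D) + s * inner l (g'' D D)))) (at s)"
        by (rule DERIV_diff[OF c' p])
      then show ?thesis unfolding \<phi>_def \<phi>'_def by (simp add: algebra_simps)
    qed
    obtain z where z: "0 < z" "z < 1" "\<phi> 1 - \<phi> 0 = (1 - 0) * \<phi>' z"
      using MVT2[of 0 1 \<phi> \<phi>'] der by auto
    have num: "\<phi> 1 - \<phi> 0 = inner l (g y - g xbar - blinfun_apply (g' xbar) (y - xbar))
     - 1/2 * inner l (blinfun_apply (g'' (y - xbar)) (y - xbar))"
      by (simp add: \<phi>_def D_def inner_diff_right)
    have g''z: "g'' (z *\<^sub>R D) = z *\<^sub>R g'' D" using linear.scaleR[OF bounded_linear.linear[OF lin]] by simp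
    have "\<phi>' z = inner l ((g' (xbar + z *\<^sub>R D) - g' xbar - g'' (z *\<^sub>R D)) D)"
      by (simp add: \<phi>'_def g''z blinfun.diff_left inner_diff_right blinfun.scaleR_left)
    then have "\<bar>\<phi>' z\<bar> \<le> norm l * norm ((g' (xbar + z *\<^sub>R D) - g' xbar - g'' (z *\<^sub>R D)) D)"
      by (metis Cauchy_Schwarz_ineq2)
    also have "\<dots> \<le> norm l * (norm (g' (xbar + z *\<^sub>R D) - g' xbar - g'' (z *\<^sub>R D)) * norm D)"
      by (intro mult_left_mono norm_blinfun) simp
    also have "\<dots> \<le> norm l * ((\<epsilon> * norm (z *\<^sub>R D)) * norm D)"
    proof -
      have "norm (z *\<^sub>R D) < d1" using z y by (simp add: D_def) (smt (verit) mult_left_le_one_le norm_ge_zero)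
      then have "norm (g' (xbar + z *\<^sub>R D) - g' xbar - g'' (z *\<^sub>R D)) \<le> \<epsilon> * norm (z *\<^sub>R D)"
        using d1(2)[rule_format, of "xbar + z *\<^sub>R D"] by simp
      then show ?thesis by (intro mult_left_mono mult_right_mono) auto
    qed
    also have "\<dots> \<le> norm l * (\<epsilon> * norm D * norm D)"
      using z \<epsilon> by (intro mult_left_mono) (auto simp: mult_left_le_one_le)
    finally have bd: "\<bar>\<phi>' z\<bar> \<le> norm l * \<epsilon> * (norm D)^2" by (simp add: power2_eq_square mult.assoc)
    have "\<epsilon> * N = e / 2" unfolding \<epsilon>_def using N by simp
    then have "\<epsilon> * (norm l + 1) = e / 2" by (simp add: N_def)
    then have "norm l * \<epsilon> < e" using e \<epsilon> by (simp add: algebra_simps)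
    have "\<bar>(\<phi> 1 - \<phi> 0) / (norm D)^2\<bar> = \<bar>\<phi>' z\<bar> / (norm D)^2"
      using z by (simp add: abs_divide)
    also have "\<dots> \<le> norm l * \<epsilon>"
      using bd Dpos by (simp add: divide_le_eq)
    finally have "\<bar>(\<phi> 1 - \<phi> 0) / (norm D)^2\<bar> \<le> norm l * \<epsilon>" .
    with \<open>norm l * \<epsilon> < e\<close> show "norm ((inner l (g y - g xbar - blinfun_apply (g' xbar) (y - xbar))
     - 1/2 * inner l (blinfun_apply (g'' (y - xbar)) (y - xbar))) / (norm (y - xbar))^2 - 0) < e"
      using num by (simp add: D_def)
  qed
qed



lemma step:
  fixes g :: "'a::euclidean_space \<Rightarrow> 'b::euclidean_space" and g' :: "'a \<Rightarrow> ('a \<Rightarrow>\<^sub>L 'b)"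
  assumes C: "closed C" "C \<noteq> {}"
    and gd: "\<forall>x\<in>cball x0 (\<delta>/2). (g has_derivative blinfun_apply (g' x)) (at x)"
    and \<delta>: "\<delta> = infdist x0 {x. g x \<in> C}" "\<delta> > 0"
    and \<rho>: "\<rho> = infdist (g x0) C" "\<rho> > 0"
  shows "\<exists>y c. norm (y - x0) \<le> \<delta>/4 \<and> c \<in> C \<and> g y \<noteq> c \<and> norm (g y - c) \<le> \<rho>
     \<and> (\<forall>c'\<in>C. norm (g y - c) \<le> norm (g y - c'))
     \<and> (\<forall>v. inner (sgn (g y - c)) (g' y v) \<ge> - (4 * \<rho> / \<delta>) * norm v)"
proof -
  define \<beta> where "\<beta> = 4 * \<rho> / \<delta>"
  have \<beta>: "\<beta> > 0" using \<delta>(2) \<rho>(2) by (simp add: \<beta>_def)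
  define K where "K = cball x0 (\<delta>/2)"
  define F where "F x = infdist (g x) C + \<beta> * norm (x - x0)" for x
  have contg: "continuous_on K g"
    using gd unfolding K_def
    by (meson continuous_at_imp_continuous_on has_derivative_continuous)
  have "continuous_on K F" unfolding F_def
    by (intro continuous_intros contg)
  moreover have "compact K" "K \<noteq> {}" using \<delta>(2) by (auto simp: K_def)
  ultimately obtain y where y: "y \<in> K" "\<forall>z\<in>K. F y \<le> F z"
    using continuous_attains_inf by blast
  have x0K: "x0 \<in> K" using \<delta>(2) by (simp add: K_def)
  have Fy: "F y \<le> \<rho>" using y(2) x0K by (auto simp: F_def \<rho>)
  have "\<beta> * norm (y - x0) \<le> \<rho>" using Fy infdist_nonneg[of "g y" C] by (simp add: F_def)
  then have "norm (y - x0) \<le> \<rho> / \<beta>" using \<beta> by (simp add: pos_le_divide_eq mult.commute)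
  moreover have "\<rho> / \<beta> = \<delta>/4" using \<delta>(2) \<rho>(2) by (simp add: \<beta>_def)
  ultimately have ny: "norm (y - x0) \<le> \<delta>/4" by simp
  obtain c where c: "c \<in> C" "infdist (g y) C = dist (g y) c"
    using infdist_attains_inf[OF C] by blast
  have gyc: "g y \<noteq> c"
  proof
    assume "g y = c"
    then have "y \<in> {x. g x \<in> C}" using c by simp
    then have "\<delta> \<le> dist x0 y" using infdist_le[of y "{x. g x \<in> C}" x0] \<delta>(1) by simp
    then show False using ny \<delta>(2) by (simp add: dist_norm norm_minus_commute)
  qed
  have m: "norm (g y - c) \<le> \<rho>"
  proof -
    have "0 \<le> \<beta> * norm (y - x0)" using \<beta> by simp
    then show ?thesis using Fy c by (simp add: F_def dist_norm)
  qed
  have near: "\<forall>c'\<in>C. norm (g y - c) \<le> norm (g y - c')"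
    using c by (metis dist_norm infdist_le)
  have fo: "inner (sgn (g y - c)) (g' y v) \<ge> - \<beta> * norm v" for v
  proof (rule ccontr)
    define D where "D = inner (sgn (g y - c)) (g' y v)"
    assume "\<not> ?thesis"
    then have D: "D < - \<beta> * norm v" by (simp add: D_def)
    define h where "h s = norm (g (y + s *\<^sub>R v) - c)" for s
    have yK: "y \<in> cball x0 (\<delta>/2)" using y K_def by simp
    have a: "((\<lambda>s. y + s *\<^sub>R v) has_derivative (\<lambda>s. s *\<^sub>R v)) (at 0)"
      by (auto intro!: derivative_eq_intros)
    have b: "(g has_derivative blinfun_apply (g' y)) (at (y + 0 *\<^sub>R v))" using gd yK by simp
    have gc: "((\<lambda>s. g (y + s *\<^sub>R v)) has_derivative (\<lambda>s. g' y (s *\<^sub>R v))) (at 0)"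
      using has_derivative_compose[OF a b] by simp
    have gc2: "((\<lambda>s. g (y + s *\<^sub>R v) - c) has_derivative (\<lambda>s. g' y (s *\<^sub>R v))) (at 0)"
      using has_derivative_diff[OF gc has_derivative_const[of c]] by simp
    have nd: "(norm has_derivative (\<lambda>h. inner h (sgn (g y - c)))) (at (g (y + 0 *\<^sub>R v) - c))"
      using has_derivative_norm[of "g y - c"] gyc by simp
    have hd: "(h has_derivative (\<lambda>s. inner (g' y (s *\<^sub>R v)) (sgn (g y - c)))) (at 0)"
      unfolding h_def using has_derivative_compose[OF gc2 nd] by simp
    have hd': "(h has_derivative (\<lambda>s. s * D)) (at 0)"
      using hd by (simp add: D_def blinfun.scaleR_right inner_commute)
    define \<eta> where "\<eta> = (- \<beta> * norm v - D) / 2"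
    have \<eta>: "\<eta> > 0" using D by (simp add: \<eta>_def)
    from hd'[unfolded has_derivative_at_alt] \<eta> obtain d where d: "d > 0"
      "\<forall>s. norm (s - 0) < d \<longrightarrow> norm (h s - h 0 - (s - 0) * D) \<le> \<eta> * norm (s - 0)"
      by blast
    define s0 where "s0 = (\<delta>/4) / (norm v + 1)"
    have s0: "s0 > 0" using \<delta> by (simp add: s0_def add_nonneg_pos)
    define s where "s = min d s0 / 2"
    have s: "s > 0" "s < d" "s < s0" using d s0 by (auto simp: s_def)
    have "s * norm v < \<delta>/4"
    proof -
      have "s * norm v \<le> s0 * norm v" using s by (simp add: mult_right_mono)
      also have "\<dots> < s0 * (norm v + 1)" using s0 by simp
      also have "\<dots> = \<delta>/4" proof -
        have nz: "norm v + 1 \<noteq> 0" using norm_ge_zero[of v] by linarith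
        have gen: "\<And>a b::real. b \<noteq> 0 \<Longrightarrow> a / b * b = a" by simp
        show ?thesis unfolding s0_def by (rule gen[OF nz])
      qed
      finally show ?thesis .
    qed
    then have "norm (y + s *\<^sub>R v - x0) < \<delta>/2"
      using ny s norm_triangle_ineq[of "y - x0" "s *\<^sub>R v"]
      by (simp add: algebra_simps)
    then have sK: "y + s *\<^sub>R v \<in> K" by (simp add: K_def dist_norm norm_minus_commute)
    have "F y \<le> F (y + s *\<^sub>R v)" using y sK by blast
    moreover have "infdist (g (y + s *\<^sub>R v)) C \<le> h s"
      unfolding h_def using c infdist_le[of c C] by (simp add: dist_norm)
    moreover have "norm (y + s *\<^sub>R v - x0) \<le> norm (y - x0) + s * norm v"
      using s norm_triangle_ineq[of "y - x0" "s *\<^sub>R v"] by (simp add: algebra_simps)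
    moreover have "infdist (g y) C = h 0" using c by (simp add: h_def dist_norm)
    ultimately have low0: "h 0 + \<beta> * norm (y - x0) \<le> h s + \<beta> * (norm (y - x0) + s * norm v)"
      unfolding F_def using \<beta> mult_left_mono[of "norm (y + s *\<^sub>R v - x0)" "norm (y - x0) + s * norm v" \<beta>]
      by linarith
    then have low: "h s \<ge> h 0 - \<beta> * s * norm v" by (simp add: algebra_simps)
    have "h s - h 0 - s * D \<le> \<eta> * s" using d(2)[rule_format, of s] s by simp
    then have "h s - h 0 \<le> s * (D + \<eta>)" by (simp add: algebra_simps)
    also have "\<dots> < s * (- \<beta> * norm v)"
    proof -
      have gen: "\<And>p q::real. p < q \<Longrightarrow> p + (q - p)/2 < q" by (simp add: field_simps)
      have "D + \<eta> < - \<beta> * norm v" using gen[OF D] unfolding \<eta>_def .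
      then show ?thesis using s by (intro mult_strict_left_mono) auto
    qed
    finally show False using low by (simp add: algebra_simps)
  qed
  show ?thesis
    using ny c gyc m near fo unfolding \<beta>_def by blast
qed




lemma ar1: "(d::real) > 0 \<Longrightarrow> s > 0 \<Longrightarrow> (d/s)/(3*d/4) \<le> 2/s"
  by (simp add: field_simps)
lemma ar2: "(d::real) > 0 \<Longrightarrow> s > 0 \<Longrightarrow> r < d/s \<Longrightarrow> 4*r/d \<le> 4/s"
  by (simp add: field_simps)
lemma ar3: "(s::real) > 0 \<Longrightarrow> n < R / (2 * s) \<Longrightarrow> 2 * n < R / s"
  by (simp add: field_simps)
lemma ar4: "(s::real) > 0 \<Longrightarrow> d > s * r \<Longrightarrow> r < d / s"
  by (simp add: field_simps)

lemma infdist_img: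
  fixes a :: "'b::real_normed_vector"
  assumes "C \<noteq> {}"
  shows "infdist 0 ((\<lambda>c. a - c) ` C) = infdist a C"
proof -
  have "(\<lambda>y. dist 0 y) ` (\<lambda>c. a - c) ` C = (\<lambda>c. dist a c) ` C"
    by (auto simp: image_image dist_norm norm_minus_commute)
  then show ?thesis using assms unfolding infdist_def by simp
qed

lemma lim_antitone_le:
  fixes \<Phi> :: "real \<Rightarrow> ereal"
  assumes mono: "\<And>e1 e2. 0 < e1 \<Longrightarrow> e1 \<le> e2 \<Longrightarrow> \<Phi> e2 \<le> \<Phi> e1"
    and bd: "\<And>e. 0 < e \<Longrightarrow> \<Phi> e \<le> A"
  shows "Lim (at_right 0) \<Phi> \<le> A"
proof -
  define S where "S = (SUP e\<in>{0<..}. \<Phi> e)"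
  have "(\<Phi> \<longlongrightarrow> S) (at_right 0)"
  proof (rule order_tendstoI)
    fix a assume "a < S"
    then obtain e0 where e0: "e0 > 0" "a < \<Phi> e0" unfolding S_def less_SUP_iff by auto
    have "\<forall>y>0. y < e0 \<longrightarrow> a < \<Phi> y"
      using e0 mono by (meson less_eq_real_def order_less_le_trans)
    then show "eventually (\<lambda>x. a < \<Phi> x) (at_right 0)"
      using e0 eventually_at_right[of 0 e0] by auto
  next
    fix a assume "S < a"
    have "\<forall>y>0. \<Phi> y < a"
      using \<open>S < a\<close> unfolding S_def by (meson SUP_upper greaterThan_iff order_le_less_trans)
    then show "eventually (\<lambda>x. \<Phi> x < a) (at_right 0)"
      using eventually_at_right_less[of "0::real"] by (auto elim: eventually_mono)
  qed
  then have "Lim (at_right 0) \<Phi> = S" by (rule tendsto_Lim[rotated]) simp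
  also have "S \<le> A" unfolding S_def by (rule SUP_least) (use bd in auto)
  finally show ?thesis .
qed

lemma nearest_regular_normal:
  fixes C :: "'b::real_inner set"
  assumes c: "c \<in> C" and zc: "z \<noteq> c" and near: "\<forall>c'\<in>C. norm (z - c) \<le> norm (z - c')"
  shows "sgn (z - c) \<in> regular_normal_cone C c"
  unfolding regular_normal_cone_def
proof (intro CollectI conjI allI impI c)
  fix e :: real assume e: "e > 0"
  define m where "m = norm (z - c)"
  have m: "m > 0" using zc by (simp add: m_def)
  show "\<exists>d>0. \<forall>z'\<in>C. norm (z' - c) < d \<longrightarrow> inner (sgn (z - c)) (z' - c) \<le> e * norm (z' - c)"
  proof (intro exI[of _ "2 * m * e"] conjI ballI impI)
    show "2 * m * e > 0" using m e by simp
    fix z' assume z': "z' \<in> C" "norm (z' - c) < 2 * m * e"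
    have "m^2 \<le> (norm (z - z'))^2" using near z' m by (simp add: m_def power_mono)
    also have "(norm (z - z'))^2 = m^2 - 2 * inner (z - c) (z' - c) + (norm (z' - c))^2"
    proof -
      have "z - z' = (z - c) - (z' - c)" by simp
      then show ?thesis unfolding m_def
        by (simp only: power2_norm_eq_inner inner_diff_left inner_diff_right inner_commute) simp
    qed
    finally have i: "2 * inner (z - c) (z' - c) \<le> (norm (z' - c))^2" by simp
    have "inner (sgn (z - c)) (z' - c) = inner (z - c) (z' - c) / m"
      by (simp add: sgn_div_norm m_def divide_inverse mult.commute)
    also have "\<dots> \<le> (norm (z' - c))^2 / (2 * m)"
      using i m by (simp add: divide_simps)
    also have "\<dots> \<le> e * norm (z' - c)"
    proof -
      have "(norm (z' - c))^2 \<le> (2 * m * e) * norm (z' - c)"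
        using z' by (simp add: power2_eq_square mult_right_mono)
      then show ?thesis using m by (simp add: divide_simps mult.commute mult.left_commute)
    qed
    finally show "inner (sgn (z - c)) (z' - c) \<le> e * norm (z' - c)" .
  qed
qed

lemma null_by_bound:
  fixes a :: "nat \<Rightarrow> 'b::real_normed_vector"
  assumes "\<And>k. norm (a k) \<le> M / real (Suc k)"
  shows "a \<longlonglongrightarrow> 0"
proof (rule Lim_null_comparison)
  show "eventually (\<lambda>k. norm (a k) \<le> M / real (Suc k)) sequentially" using assms by simp
  show "(\<lambda>k. M / real (Suc k)) \<longlonglongrightarrow> 0"
    using LIMSEQ_Suc[OF lim_const_over_n[of M]] by simp
qed



theorem corollary4p6:
  fixes g :: "'a::euclidean_space \<Rightarrow> 'b::euclidean_space"
    and C :: "'b set"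
    and xbar :: 'a
    and g' :: "'a \<Rightarrow> ('a \<Rightarrow>\<^sub>L 'b)"
    and g'' :: "'a \<Rightarrow> ('a \<Rightarrow>\<^sub>L 'b)"
  assumes closedC: "closed C"
    and feas: "g xbar \<in> C"
    and C1: "\<exists>U. open U \<and> xbar \<in> U \<and> (\<forall>x\<in>U. (g has_derivative blinfun_apply (g' x)) (at x))
              \<and> continuous_on U g'"
    and twice: "(g' has_derivative g'') (at xbar)"
    and SOSC: "\<And>u lam. u \<noteq> 0 \<Longrightarrow>
        blinfun_apply (g' xbar) u \<in> tangent_cone C (g xbar) \<Longrightarrow>
        lam \<in> dir_normal_cone C (g xbar) (blinfun_apply (g' xbar) u) \<Longrightarrow>
        adjoint (blinfun_apply (g' xbar)) lam = 0 \<Longrightarrow>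
        ereal (1/2 * inner lam (blinfun_apply (g'' u) u))
          \<ge> lower_curvature C lam (g xbar) (blinfun_apply (g' xbar) u) \<Longrightarrow>
        lam = 0"
  shows "metrically_subregular (\<lambda>x. (\<lambda>c. g x - c) ` C) xbar 0"
proof (rule ccontr)
  assume nsr: "\<not> metrically_subregular (\<lambda>x. (\<lambda>c. g x - c) ` C) xbar 0"
  obtain U0 where U0: "open U0" "xbar \<in> U0" and gd: "\<forall>x\<in>U0. (g has_derivative blinfun_apply (g' x)) (at x)"
    and cg': "continuous_on U0 g'" using C1 by blast
  obtain R where R: "R > 0" "ball xbar R \<subseteq> U0" using U0 by (meson openE)
  define S where "S = {x. g x \<in> C}"
  have Cne: "C \<noteq> {}" using feas by blast
  have xS: "xbar \<in> S" using feas by (simp add: S_def)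
  have Fset: "{x'. (0::'b) \<in> (\<lambda>c. g x' - c) ` C} = S"
    by (auto simp: S_def image_iff)
  have z0: "(0::'b) \<in> (\<lambda>c. g xbar - c) ` C" using feas by (auto simp: image_iff)
  have nsr1: "\<not> (\<exists>\<kappa>\<ge>0. \<exists>U. open U \<and> xbar \<in> U \<and> (\<forall>x\<in>U. infdist x S \<le> \<kappa> * infdist (g x) C))"
    using nsr z0 unfolding metrically_subregular_def Fset infdist_img[OF Cne] by simp
  have nsr2: "\<exists>x\<in>U. infdist x S > \<kappa> * infdist (g x) C" if "\<kappa> \<ge> 0" "open U" "xbar \<in> U" for \<kappa> U
  proof (rule ccontr)
    assume "\<not> (\<exists>x\<in>U. infdist x S > \<kappa> * infdist (g x) C)"
    then have "\<forall>x\<in>U. infdist x S \<le> \<kappa> * infdist (g x) C" by (auto simp: not_less)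
    then show False using nsr1 that by blast
  qed
  have "\<forall>k::nat. \<exists>x. x \<in> ball xbar (R / (2 * real (Suc k))) \<and> infdist x S > real (Suc k) * infdist (g x) C"
  proof
    fix k :: nat
    have r: "R / (2 * real (Suc k)) > 0" using R by simp
    have "\<exists>x\<in>ball xbar (R / (2 * real (Suc k))). infdist x S > real (Suc k) * infdist (g x) C"
      by (rule nsr2) (use r in auto)
    then show "\<exists>x. x \<in> ball xbar (R / (2 * real (Suc k))) \<and> infdist x S > real (Suc k) * infdist (g x) C"
      by blast
  qed
  then obtain xs where xs0: "\<forall>k. xs k \<in> ball xbar (R / (2 * real (Suc k))) \<and> infdist (xs k) S > real (Suc k) * infdist (g (xs k)) C"
    by (rule choice[THEN exE])
  have xs: "\<And>k. xs k \<in> ball xbar (R / (2 * real (Suc k)))"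
      "\<And>k. infdist (xs k) S > real (Suc k) * infdist (g (xs k)) C" using xs0 by auto
  define \<delta> where "\<delta> k = infdist (xs k) S" for k
  define \<rho> where "\<rho> k = infdist (g (xs k)) C" for k
  have nx: "norm (xs k - xbar) < R / (2 * real (Suc k))" for k
    using xs(1)[of k] by (simp add: dist_norm norm_minus_commute)
  have \<delta>le: "\<delta> k \<le> norm (xs k - xbar)" for k
    using infdist_le[OF xS, of "xs k"] by (simp add: \<delta>_def dist_norm)
  have \<rho>0: "\<rho> k \<ge> 0" for k by (simp add: \<rho>_def infdist_nonneg)
  have \<delta>\<rho>: "\<delta> k > real (Suc k) * \<rho> k" for k using xs(2)[of k] by (simp add: \<delta>_def \<rho>_def)
  have \<delta>pos: "\<delta> k > 0" for k
  proof -
    have "0 \<le> real (Suc k) * \<rho> k" using \<rho>0[of k] by simp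
    then show ?thesis using \<delta>\<rho>[of k] by linarith
  qed
  have \<rho>pos: "\<rho> k > 0" for k
  proof (rule ccontr)
    assume "\<not> \<rho> k > 0"
    then have "\<rho> k = 0" using \<rho>0[of k] by simp
    then have "g (xs k) \<in> C" using in_closed_iff_infdist_zero[OF closedC Cne] by (simp add: \<rho>_def)
    then have "\<delta> k = 0" by (simp add: \<delta>_def S_def)
    then show False using \<delta>pos[of k] by simp
  qed
  have \<rho>lt: "\<rho> k < \<delta> k / real (Suc k)" for k
    using \<delta>\<rho>[of k] by (simp add: field_simps mult.commute)
  have ballU: "\<forall>x\<in>cball (xs k) (\<delta> k / 2). (g has_derivative blinfun_apply (g' x)) (at x)" for k
  proof
    fix x assume x: "x \<in> cball (xs k) (\<delta> k / 2)"
    have "R / (2 * real (Suc k)) \<le> R / 2" by (rule divide_left_mono) (use R in auto)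
    then have "norm (xs k - xbar) < R / 2" using nx[of k] by linarith
    moreover have "norm (x - xs k) \<le> \<delta> k / 2" using x by (simp add: dist_norm norm_minus_commute)
    ultimately have "norm (x - xbar) < R"
      using \<delta>le[of k] norm_triangle_ineq[of "x - xs k" "xs k - xbar"] R(1) by simp
    then have "x \<in> U0" using R by (auto simp: dist_norm norm_minus_commute)
    then show "(g has_derivative blinfun_apply (g' x)) (at x)" using gd by blast
  qed
  have "\<forall>k. \<exists>p. norm (fst p - xs k) \<le> \<delta> k/4 \<and> snd p \<in> C \<and> g (fst p) \<noteq> snd p \<and> norm (g (fst p) - snd p) \<le> \<rho> k
     \<and> (\<forall>c'\<in>C. norm (g (fst p) - snd p) \<le> norm (g (fst p) - c'))
     \<and> (\<forall>v. inner (sgn (g (fst p) - snd p)) (g' (fst p) v) \<ge> - (4 * \<rho> k / \<delta> k) * norm v)"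
  proof
    fix k
    from step[OF closedC Cne ballU[of k] _ \<delta>pos[of k] _ \<rho>pos[of k]]
    show "\<exists>p. norm (fst p - xs k) \<le> \<delta> k/4 \<and> snd p \<in> C \<and> g (fst p) \<noteq> snd p \<and> norm (g (fst p) - snd p) \<le> \<rho> k
     \<and> (\<forall>c'\<in>C. norm (g (fst p) - snd p) \<le> norm (g (fst p) - c'))
     \<and> (\<forall>v. inner (sgn (g (fst p) - snd p)) (g' (fst p) v) \<ge> - (4 * \<rho> k / \<delta> k) * norm v)"
      unfolding \<delta>_def \<rho>_def S_def by simp
  qed
  then obtain p where p0: "\<forall>k. norm (fst (p k) - xs k) \<le> \<delta> k/4 \<and> snd (p k) \<in> C \<and> g (fst (p k)) \<noteq> snd (p k) \<and> norm (g (fst (p k)) - snd (p k)) \<le> \<rho> k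
     \<and> (\<forall>c'\<in>C. norm (g (fst (p k)) - snd (p k)) \<le> norm (g (fst (p k)) - c'))
     \<and> (\<forall>v. inner (sgn (g (fst (p k)) - snd (p k))) (g' (fst (p k)) v) \<ge> - (4 * \<rho> k / \<delta> k) * norm v)"
    by (rule choice[THEN exE])
  have p: "\<And>k. norm (fst (p k) - xs k) \<le> \<delta> k/4" "\<And>k. snd (p k) \<in> C"
    "\<And>k. g (fst (p k)) \<noteq> snd (p k)" "\<And>k. norm (g (fst (p k)) - snd (p k)) \<le> \<rho> k"
    "\<And>k. \<forall>c'\<in>C. norm (g (fst (p k)) - snd (p k)) \<le> norm (g (fst (p k)) - c')"
    "\<And>k v. inner (sgn (g (fst (p k)) - snd (p k))) (g' (fst (p k)) v) \<ge> - (4 * \<rho> k / \<delta> k) * norm v"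
    using p0 by auto
  define y where "y k = fst (p k)" for k
  define c where "c k = snd (p k)" for k
  define t where "t k = norm (y k - xbar)" for k
  define u where "u k = (1 / t k) *\<^sub>R (y k - xbar)" for k
  define lam where "lam k = sgn (g (y k) - c k)" for k
  define m where "m k = norm (g (y k) - c k)" for k
  define \<beta> where "\<beta> k = 4 * \<rho> k / \<delta> k" for k
  note p = p[folded y_def c_def]
  have tlow: "t k \<ge> 3 * \<delta> k / 4" for k
    using p(1)[of k] \<delta>le[of k] norm_triangle_ineq[of "y k - xbar" "xs k - y k"]
    by (simp add: t_def norm_minus_commute)
  have tpos: "t k > 0" for k using tlow[of k] \<delta>pos[of k] by linarith
  have tup: "t k \<le> 2 * norm (xs k - xbar)" for k
  proof -
    have "y k - xbar = (y k - xs k) + (xs k - xbar)" by simp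
    then have "t k \<le> norm (y k - xs k) + norm (xs k - xbar)" unfolding t_def by (metis norm_triangle_ineq)
    then show ?thesis using p(1)[of k] \<delta>le[of k] norm_ge_zero[of "xs k - xbar"] by linarith
  qed
  have sk: "real (Suc k) > 0" for k by simp
  have t0: "t \<longlonglongrightarrow> 0"
  proof (rule null_by_bound[of _ R])
    fix k
    have "t k < R / real (Suc k)" using tup[of k] ar3[OF sk nx[of k]] by linarith
    then show "norm (t k) \<le> R / real (Suc k)" using tpos[of k] by simp
  qed
  have mpos: "m k > 0" for k using p(3)[of k] by (simp add: m_def)
  have mt0: "(\<lambda>k. m k / t k) \<longlonglongrightarrow> 0"
  proof (rule null_by_bound[of _ 2])
    fix k
    have "m k \<le> \<rho> k" using p(4) by (simp add: m_def)
    also have "\<dots> \<le> \<delta> k / real (Suc k)" using \<rho>lt[of k] by simp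
    finally have a: "m k \<le> \<delta> k / real (Suc k)" .
    have "m k / t k \<le> (\<delta> k / real (Suc k)) / t k"
      by (rule divide_right_mono[OF a]) (use tpos[of k] in simp)
    also have "\<dots> \<le> (\<delta> k / real (Suc k)) / (3 * \<delta> k / 4)"
      by (rule divide_left_mono) (use tlow[of k] \<delta>pos[of k] tpos[of k] in auto)
    also have "\<dots> \<le> 2 / real (Suc k)" by (rule ar1[OF \<delta>pos sk])
    finally show "norm (m k / t k) \<le> 2 / real (Suc k)" using mpos[of k] tpos[of k] by simp
  qed
  have \<beta>0: "\<beta> \<longlonglongrightarrow> 0"
  proof (rule null_by_bound[of _ 4])
    fix k
    have "\<beta> k \<le> 4 / real (Suc k)" unfolding \<beta>_def by (rule ar2[OF \<delta>pos sk \<rho>lt])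
    then show "norm (\<beta> k) \<le> 4 / real (Suc k)" using \<rho>pos[of k] \<delta>pos[of k] by (simp add: \<beta>_def)
  qed
  have y0: "y \<longlonglongrightarrow> xbar"
  proof -
    have "(\<lambda>k. norm (y k - xbar)) \<longlonglongrightarrow> 0" using t0 by (simp add: t_def[abs_def])
    then have "(\<lambda>k. y k - xbar) \<longlonglongrightarrow> 0" by (simp only: tendsto_norm_zero_iff)
    then have "(\<lambda>k. (y k - xbar) + xbar) \<longlonglongrightarrow> 0 + xbar" by (intro tendsto_add) auto
    then show ?thesis by simp
  qed
  have nu: "norm (u k) = 1" for k using tpos[of k] by (simp add: u_def t_def)
  have nlam: "norm (lam k) = 1" for k using p(3)[of k] by (simp add: lam_def norm_sgn)
  have yu: "y k - xbar = t k *\<^sub>R u k" for k using tpos[of k] by (simp add: u_def)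
  have cm: "c k = g (y k) - m k *\<^sub>R lam k" for k
    using mpos[of k] by (simp add: lam_def m_def sgn_div_norm)
  have "seq_compact (sphere (0::'a) 1 \<times> sphere (0::'b) 1)"
    by (intro compact_imp_seq_compact compact_Times compact_sphere)
  moreover have "\<forall>k. (u k, lam k) \<in> sphere 0 1 \<times> sphere 0 1" using nu nlam by simp
  ultimately obtain l r where lr: "l \<in> sphere (0::'a) 1 \<times> sphere (0::'b) 1" "strict_mono r"
    "((\<lambda>k. (u k, lam k)) \<circ> r) \<longlonglongrightarrow> l"
    by (rule seq_compactE)
  define uu where "uu = fst l"
  define la where "la = snd l"
  have uuc: "(u \<circ> r) \<longlonglongrightarrow> uu"
    using tendsto_fst[OF lr(3)] by (simp add: uu_def o_def)
  have lac: "(lam \<circ> r) \<longlonglongrightarrow> la"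
    using tendsto_snd[OF lr(3)] by (simp add: la_def o_def)
  have nuu: "norm uu = 1" and nla: "norm la = 1" using lr(1) by (auto simp: uu_def la_def)
  have t0r: "(\<lambda>n. t (r n)) \<longlonglongrightarrow> 0" using LIMSEQ_subseq_LIMSEQ[OF t0 lr(2)] by (simp add: o_def)
  have y0r: "(\<lambda>n. y (r n)) \<longlonglongrightarrow> xbar" using LIMSEQ_subseq_LIMSEQ[OF y0 lr(2)] by (simp add: o_def)
  have mt0r: "(\<lambda>n. m (r n) / t (r n)) \<longlonglongrightarrow> 0" using LIMSEQ_subseq_LIMSEQ[OF mt0 lr(2)] by (simp add: o_def)
  have \<beta>0r: "(\<lambda>n. \<beta> (r n)) \<longlonglongrightarrow> 0" using LIMSEQ_subseq_LIMSEQ[OF \<beta>0 lr(2)] by (simp add: o_def)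
  have ur: "(\<lambda>n. u (r n)) \<longlonglongrightarrow> uu" using uuc by (simp add: o_def)
  have lr': "(\<lambda>n. lam (r n)) \<longlonglongrightarrow> la" using lac by (simp add: o_def)
  have isc: "isCont g' xbar" using cg' U0 continuous_on_eq_continuous_at by blast
  have g'r: "(\<lambda>n. g' (y (r n))) \<longlonglongrightarrow> g' xbar" by (rule isCont_tendsto_compose[OF isc y0r])
  have fo: "\<bar>inner (lam k) (g' (y k) v)\<bar> \<le> \<beta> k * norm v" for k v
  proof -
    have 1: "inner (lam k) (g' (y k) v) \<ge> - \<beta> k * norm v" using p(6)[of k v] by (simp add: lam_def \<beta>_def)
    have "inner (lam k) (g' (y k) (- v)) \<ge> - \<beta> k * norm (- v)" using p(6)[of k "-v"] by (simp add: lam_def \<beta>_def)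
    then have 2: "inner (lam k) (g' (y k) v) \<le> \<beta> k * norm v" by (simp add: blinfun.minus_right)
    show ?thesis using 1 2 by linarith
  qed
  have orth: "inner la (g' xbar v) = 0" for v
  proof -
    have a: "(\<lambda>n. inner (lam (r n)) (g' (y (r n)) v)) \<longlonglongrightarrow> inner la (g' xbar v)"
      by (intro tendsto_inner lr' blinfun.tendsto g'r tendsto_const)
    have "(\<lambda>n. inner (lam (r n)) (g' (y (r n)) v)) \<longlonglongrightarrow> 0"
    proof (rule Lim_null_comparison)
      show "eventually (\<lambda>n. norm (inner (lam (r n)) (g' (y (r n)) v)) \<le> \<beta> (r n) * norm v) sequentially"
        using fo by simp
      show "(\<lambda>n. \<beta> (r n) * norm v) \<longlonglongrightarrow> 0" using tendsto_mult_left_zero[OF \<beta>0r] by simp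
    qed
    with a show ?thesis using LIMSEQ_unique by blast
  qed
  have adj: "adjoint (blinfun_apply (g' xbar)) la = 0"
  proof -
    have lin: "linear (blinfun_apply (g' xbar))" by (rule bounded_linear.linear[OF blinfun.bounded_linear_right])
    define q where "q = adjoint (blinfun_apply (g' xbar)) la"
    have "inner q q = inner (g' xbar q) la" using adjoint_works[OF lin, of q la] by (simp add: q_def)
    also have "\<dots> = 0" using orth[of q] by (simp add: inner_commute)
    finally show ?thesis by (simp add: q_def)
  qed
  define w where "w = g' xbar uu"
  define wk where "wk n = (1 / t (r n)) *\<^sub>R (c (r n) - g xbar)" for n
  have wkc: "g xbar + t (r n) *\<^sub>R wk n = c (r n)" for n using tpos[of "r n"] by (simp add: wk_def)
  have wk_eq: "wk n = (1 / t (r n)) *\<^sub>R (g (y (r n)) - g xbar - g' xbar (y (r n) - xbar))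
      + g' xbar (u (r n)) - (m (r n) / t (r n)) *\<^sub>R lam (r n)" for n
  proof -
    have "g' xbar (u (r n)) = (1 / t (r n)) *\<^sub>R g' xbar (y (r n) - xbar)"
      by (simp add: u_def blinfun.scaleR_right)
    then show ?thesis unfolding wk_def cm[of "r n"]
      by (simp add: algebra_simps scaleR_diff_right)
  qed
  have hdx: "(g has_derivative blinfun_apply (g' xbar)) (at xbar)" using gd U0 by blast
  have fil: "filterlim (\<lambda>n. y (r n) - xbar) (at 0) sequentially"
  proof (rule filterlim_atI)
    show "(\<lambda>n. y (r n) - xbar) \<longlonglongrightarrow> 0" using tendsto_diff[OF y0r tendsto_const[of xbar]] by simp
    show "eventually (\<lambda>n. y (r n) - xbar \<noteq> 0) sequentially" using tpos by (simp add: t_def)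
  qed
  have fil2: "filterlim (\<lambda>n. y (r n)) (at xbar) sequentially"
  proof (rule filterlim_atI)
    show "(\<lambda>n. y (r n)) \<longlonglongrightarrow> xbar" by (rule y0r)
    show "eventually (\<lambda>n. y (r n) \<noteq> xbar) sequentially" using tpos by (simp add: t_def)
  qed
  have T1: "(\<lambda>n. (1 / t (r n)) *\<^sub>R (g (y (r n)) - g xbar - g' xbar (y (r n) - xbar))) \<longlonglongrightarrow> 0"
  proof -
    have "(\<lambda>h. norm (g (xbar + h) - g xbar - g' xbar h) / norm h) \<midarrow>0\<rightarrow> 0"
      using hdx unfolding has_derivative_at by blast
    from filterlim_compose[OF this fil]
    have "(\<lambda>n. norm (g (y (r n)) - g xbar - g' xbar (y (r n) - xbar)) / t (r n)) \<longlonglongrightarrow> 0"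
      by (simp add: t_def)
    then have "(\<lambda>n. norm ((1 / t (r n)) *\<^sub>R (g (y (r n)) - g xbar - g' xbar (y (r n) - xbar)))) \<longlonglongrightarrow> 0"
      using tpos by (simp add: divide_inverse mult.commute abs_of_pos)
    then show ?thesis by (simp only: tendsto_norm_zero_iff)
  qed
  have wkl: "wk \<longlonglongrightarrow> w"
  proof -
    have "(\<lambda>n. (1 / t (r n)) *\<^sub>R (g (y (r n)) - g xbar - g' xbar (y (r n) - xbar))
      + g' xbar (u (r n)) - (m (r n) / t (r n)) *\<^sub>R lam (r n)) \<longlonglongrightarrow> 0 + g' xbar uu - 0 *\<^sub>R la"
      by (intro tendsto_intros T1 ur mt0r lr' blinfun.tendsto tendsto_const)
    then show ?thesis unfolding wk_eq[abs_def] w_def by simp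
  qed
  have regn: "lam k \<in> regular_normal_cone C (c k)" for k
    unfolding lam_def by (rule nearest_regular_normal[OF p(2) p(3) p(5)])
  have tpr: "\<forall>n. t (r n) > 0" using tpos by simp
  have tang: "w \<in> tangent_cone C (g xbar)"
    unfolding tangent_cone_def
    using tpr t0r wkl wkc p(2) by (intro CollectI exI[of _ "\<lambda>n. t (r n)"] exI[of _ wk]) auto
  have dirn: "la \<in> dir_normal_cone C (g xbar) w"
    unfolding dir_normal_cone_def
    using tpr t0r wkl wkc p(2) lr' regn
    by (intro CollectI exI[of _ "\<lambda>n. t (r n)"] exI[of _ wk] exI[of _ "\<lambda>n. lam (r n)"]) auto
  define a where "a = 1/2 * inner la (g'' uu uu)"
  have lin'': "bounded_linear g''" using twice by (simp add: has_derivative_def)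
  have Tq: "(\<lambda>n. (inner la (g (y (r n)) - g xbar - g' xbar (y (r n) - xbar))
     - 1/2 * inner la (g'' (y (r n) - xbar) (y (r n) - xbar))) / (t (r n))^2) \<longlonglongrightarrow> 0"
    using filterlim_compose[OF taylor2[OF U0 gd twice, of la] fil2] by (simp add: t_def o_def)
  have g''c: "(\<lambda>n. inner la (g'' (u (r n)) (u (r n)))) \<longlonglongrightarrow> inner la (g'' uu uu)"
  proof -
    have "(\<lambda>n. g'' (u (r n))) \<longlonglongrightarrow> g'' uu" by (rule bounded_linear.tendsto[OF lin'' ur])
    then show ?thesis by (intro tendsto_inner tendsto_const blinfun.tendsto ur)
  qed
  define E where "E n = inner la (g (y (r n)) - g xbar - g' xbar (y (r n) - xbar))" for n
  define P where "P n = (E n - 1/2 * inner la (g'' (y (r n) - xbar) (y (r n) - xbar))) / (t (r n))^2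
      + 1/2 * inner la (g'' (u (r n)) (u (r n)))" for n
  have Pc: "P \<longlonglongrightarrow> 0 + a"
    unfolding P_def[abs_def] a_def E_def by (intro tendsto_add Tq tendsto_mult tendsto_const g''c)
  define q where "q n = inner la (wk n - w) / t (r n)" for n
  have key: "q n \<le> P n" if pos: "inner la (lam (r n)) \<ge> 0" for n
  proof -
    define k where "k = r n"
    define T where "T = t k"
    have T: "T > 0" using tpos by (simp add: T_def)
    define d where "d = y k - xbar"
    have d: "d = T *\<^sub>R u k" using yu[of k] by (simp add: d_def T_def)
    have iw: "inner la w = 0" using orth by (simp add: w_def)
    have "c k - g xbar = (g (y k) - g xbar - g' xbar d) + g' xbar d - m k *\<^sub>R lam k"
      using cm[of k] by simp
    then have icg: "inner la (c k - g xbar) = E n - m k * inner la (lam k)"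
      using orth[of d] by (simp add: E_def k_def d_def inner_diff_right inner_add_right)
    have e1: "inner la (wk n - w) = (E n - m k * inner la (lam k)) / T"
      using icg iw by (simp add: wk_def inner_diff_right k_def T_def)
    have "g'' d = T *\<^sub>R g'' (u k)" using d linear.scaleR[OF bounded_linear.linear[OF lin'']] by simp
    then have e2: "inner la (g'' d d) = T^2 * inner la (g'' (u k) (u k))"
      using d by (simp add: blinfun.scaleR_left blinfun.scaleR_right power2_eq_square)
    have qn: "q n = (E n - m k * inner la (lam k)) / T^2"
      using e1 T by (simp add: q_def T_def k_def power2_eq_square)
    have Pn: "P n = E n / T^2"
      using e2 T by (simp add: P_def d_def[symmetric] k_def[symmetric] T_def[symmetric] field_simps)
    have "m k * inner la (lam k) \<ge> 0" using mpos[of k] pos by (simp add: k_def)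
    then show ?thesis unfolding qn Pn using T by (simp add: divide_right_mono)
  qed
  define Set where "Set e = {ereal (inner la (v' - w) / \<tau>) | \<tau> v'. 0 < \<tau> \<and> \<tau> < e \<and> norm (v' - w) < e \<and>
           (\<exists>\<mu>\<in>limiting_normal_cone C (g xbar + \<tau> *\<^sub>R v'). dist la \<mu> < e)}" for e
  have lceq: "lower_curvature C la (g xbar) w = Lim (at_right 0) (\<lambda>e. Inf (Set e))"
    by (simp add: lower_curvature_def Set_def)
  have curv: "lower_curvature C la (g xbar) w \<le> ereal a"
    unfolding lceq
  proof (rule lim_antitone_le)
    fix e1 e2 :: real assume e12: "0 < e1" "e1 \<le> e2"
    have "Set e1 \<subseteq> Set e2"
    proof (rule subsetI)
      fix x assume "x \<in> Set e1"
      then obtain \<tau> v' \<mu> where x: "x = ereal (inner la (v' - w) / \<tau>)" and h: "0 < \<tau>" "\<tau> < e1" "norm (v' - w) < e1"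
        "\<mu> \<in> limiting_normal_cone C (g xbar + \<tau> *\<^sub>R v')" "dist la \<mu> < e1"
        unfolding Set_def by blast
      have "\<tau> < e2" "norm (v' - w) < e2" "dist la \<mu> < e2" using h e12 by auto
      then show "x \<in> Set e2" unfolding Set_def x using h(1,4)
        by (intro CollectI exI[of _ \<tau>] exI[of _ v']) blast
    qed
    then show "Inf (Set e2) \<le> Inf (Set e1)" by (rule Inf_superset_mono)
  next
    fix e :: real assume e: "0 < e"
    show "Inf (Set e) \<le> ereal a"
    proof (rule ereal_le_epsilon2)
      fix \<eta> :: real assume \<eta>: "0 < \<eta>"
      have ev1: "eventually (\<lambda>n. t (r n) < e) sequentially" using order_tendstoD(2)[OF t0r e] .
      have ev2: "eventually (\<lambda>n. dist (wk n) w < e) sequentially" using tendstoD[OF wkl e] .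
      have ev3: "eventually (\<lambda>n. dist (lam (r n)) la < e) sequentially" using tendstoD[OF lr' e] .
      have "(\<lambda>n. inner la (lam (r n))) \<longlonglongrightarrow> inner la la" by (intro tendsto_inner tendsto_const lr')
      moreover have "inner la la = 1" using nla by (simp add: power2_norm_eq_inner[symmetric])
      ultimately have lim1: "(\<lambda>n. inner la (lam (r n))) \<longlonglongrightarrow> 1" by simp
      have ev4: "eventually (\<lambda>n. inner la (lam (r n)) > 0) sequentially"
        by (rule order_tendstoD(1)[OF lim1]) simp
      have ev5: "eventually (\<lambda>n. P n < a + \<eta>) sequentially"
        using order_tendstoD(2)[OF Pc, of "a + \<eta>"] \<eta> by simp
      have "eventually (\<lambda>n. t (r n) < e \<and> dist (wk n) w < e \<and> dist (lam (r n)) la < e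
           \<and> inner la (lam (r n)) > 0 \<and> P n < a + \<eta>) sequentially"
        by (rule eventually_conj[OF ev1 eventually_conj[OF ev2 eventually_conj[OF ev3 eventually_conj[OF ev4 ev5]]]])
      then obtain N where N: "\<forall>n\<ge>N. t (r n) < e \<and> dist (wk n) w < e \<and> dist (lam (r n)) la < e
           \<and> inner la (lam (r n)) > 0 \<and> P n < a + \<eta>"
        unfolding eventually_sequentially by blast
      then have NN: "t (r N) < e" "dist (wk N) w < e" "dist (lam (r N)) la < e"
           "inner la (lam (r N)) > 0" "P N < a + \<eta>" by auto
      have lim: "lam (r N) \<in> limiting_normal_cone C (g xbar + t (r N) *\<^sub>R wk N)"
        unfolding wkc limiting_normal_cone_def
      proof (intro CollectI conjI)
        show "c (r N) \<in> C" by (rule p(2))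
        show "\<exists>zk vk. (\<forall>k. zk k \<in> C) \<and> zk \<longlonglongrightarrow> c (r N) \<and> vk \<longlonglongrightarrow> lam (r N) \<and>
            (\<forall>k. vk k \<in> regular_normal_cone C (zk k))"
          by (rule exI[of _ "\<lambda>_. c (r N)"], rule exI[of _ "\<lambda>_. lam (r N)"]) (simp add: p(2) regn)
      qed
      have mem: "ereal (q N) \<in> Set e"
        unfolding q_def Set_def using NN(1,2,3) tpos[of "r N"] lim
        by (intro CollectI exI[of _ "t (r N)"] exI[of _ "wk N"]) (auto simp: dist_norm norm_minus_commute)
      have "q N \<le> a + \<eta>" using key[of N] NN(4,5) by simp
      then have "Inf (Set e) \<le> ereal (a + \<eta>)"
        using Inf_lower[OF mem] by (meson ereal_less_eq(3) order_trans)
      then show "Inf (Set e) \<le> ereal a + ereal \<eta>"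
        by simp
    qed
  qed
  have "la = 0"
  proof (rule SOSC)
    show "uu \<noteq> 0" using nuu by auto
    show "blinfun_apply (g' xbar) uu \<in> tangent_cone C (g xbar)" using tang by (simp add: w_def)
    show "la \<in> dir_normal_cone C (g xbar) (blinfun_apply (g' xbar) uu)" using dirn by (simp add: w_def)
    show "adjoint (blinfun_apply (g' xbar)) la = 0" by (rule adj)
    show "ereal (1/2 * inner la (blinfun_apply (g'' uu) uu)) \<ge> lower_curvature C la (g xbar) (blinfun_apply (g' xbar) uu)"
      using curv by (simp add: w_def a_def)
  qed
  then show False using nla by simp
qed

end
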